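(* Assume (AC1) holds and $(\xi_i)_{i=1}^k$ is a family of vector fields as in (AC3). Then for every $u\in\mathcal A$ and every $d\in\mathcal H$ with $d\perp C_u$, $$\sum_{i=1}^k\langle u,\xi_i(u)\rangle\,\xi_i'(u)[d]=d-\sum_{i=1}^k\langle u,\xi_i'(u)[d]\rangle\,\xi_i(u).$$
   Context: $\mathcal H$ is a real Hilbert space with inner product $\langle\cdot,\cdot\rangle$; $\mathcal A\subset\mathcal H$ open; for each $u\in\mathcal A$, $C_u$ is a closed cone; $\operatorname{span}C$ is the smallest closed subspace containing $C$, $\operatorname{int}C$ the interior of $C$ relative to $\operatorname{span}C$; $d\perp C$ means $d\perp\operatorname{span}C$; $\phi:\mathcal A\to\mathcal A$ is a given map. (AC1): for all $u\in\mathcal A$, $u\in C_u$. (AC3): there exist a closed subspace $E\subset\mathcal H$ and $C^1$ maps $\xi_i:\mathcal A\to E^\perp$, $i=1,\dots,k$, such that for all $u\in\mathcal A$ and all $i$: (i) $(\xi_i(u))_{i=1}^k$ is orthonormal; (ii) for all $v\in V_u:=\operatorname{span}\{\xi_1(u),\dots,\xi_k(u)\}$, $\xi_i'(u)[v]\in V_u$; (iii) $\xi_i(v)=\xi_i(u)$ for all $v\in\operatorname{int}C_u\cap\mathcal A$; (iv) $\langle u,\xi_i(u)\rangle\ne0$; (v) there is $r>0$ such that $\xi_i'$ is bounded on $\{u\in\mathcal A:\operatorname{dist}(u,\operatorname{Ran}\phi)<r\}$; and $C_u:=E\oplus\{\sum_i t_i\xi_i(u): t_i\ge0\}$. *)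

theory Defs
  imports "HOL-Analysis.Analysis"
begin

definition cspan :: "'a::real_normed_vector set \<Rightarrow> 'a set" where
  "cspan C = closure (span C)"

definition cint :: "'a::real_normed_vector set \<Rightarrow> 'a set" where
  "cint C = {x \<in> C. \<exists>e>0. ball x e \<inter> cspan C \<subseteq> C}"

definition perp_cone :: "'a::real_inner \<Rightarrow> 'a set \<Rightarrow> bool" where
  "perp_cone d C \<longleftrightarrow> (\<forall>c\<in>cspan C. d \<bullet> c = 0)"

definition ACcone :: "'a::real_vector set \<Rightarrow> (nat \<Rightarrow> 'a \<Rightarrow> 'a) \<Rightarrow> nat \<Rightarrow> 'a \<Rightarrow> 'a set" where
  "ACcone E \<xi> k u = {e + (\<Sum>i=1..k. t i *\<^sub>R \<xi> i u) | e t. e \<in> E \<and> (\<forall>i. 0 \<le> t i)}"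

end

theory Submission
  imports Defs
begin

lemma zero_deriv_open:
  fixes g :: "'a::real_normed_vector \<Rightarrow> real"
  assumes "(g has_derivative g') (at u)" "open A" "u \<in> A" "\<And>v. v \<in> A \<Longrightarrow> g v = 0"
  shows "g' h = 0"
proof -
  have "((\<lambda>v. 0) has_derivative (\<lambda>_. 0)) (at u)" by (rule has_derivative_const)
  hence "(g has_derivative (\<lambda>_. 0)) (at u)"
    by (rule has_derivative_transform_within_open[OF _ assms(2,3)]) (simp add: assms(4))
  hence "g' = (\<lambda>_. 0)" using has_derivative_unique assms(1) by blast
  thus ?thesis by simp
qed

theorem mainTheorem3:
  fixes A :: "'a::{real_inner, complete_space} set"
    and \<phi> :: "'a \<Rightarrow> 'a"
    and E :: "'a set"
    and k :: nat
    and \<xi> :: "nat \<Rightarrow> 'a \<Rightarrow> 'a"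
    and \<xi>' :: "nat \<Rightarrow> 'a \<Rightarrow> 'a \<Rightarrow>\<^sub>L 'a"
  assumes A_open: "open A"
    and \<phi>_maps: "\<forall>u\<in>A. \<phi> u \<in> A"
    and k_pos: "1 \<le> k"
    and E_sub: "subspace E" and E_closed: "closed E"
    and \<xi>_perp: "\<forall>i\<in>{1..k}. \<forall>u\<in>A. \<forall>e\<in>E. \<xi> i u \<bullet> e = 0"
    and \<xi>_deriv: "\<forall>i\<in>{1..k}. \<forall>u\<in>A. (\<xi> i has_derivative blinfun_apply (\<xi>' i u)) (at u)"
    and \<xi>_C1: "\<forall>i\<in>{1..k}. continuous_on A (\<xi>' i)"
    and AC3_i: "\<forall>u\<in>A. \<forall>i\<in>{1..k}. \<forall>j\<in>{1..k}. \<xi> i u \<bullet> \<xi> j u = (if i = j then 1 else 0)"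
    and AC3_ii: "\<forall>u\<in>A. \<forall>i\<in>{1..k}. \<forall>v\<in>span ((\<lambda>j. \<xi> j u) ` {1..k}).
                   blinfun_apply (\<xi>' i u) v \<in> span ((\<lambda>j. \<xi> j u) ` {1..k})"
    and AC3_iii: "\<forall>u\<in>A. \<forall>i\<in>{1..k}. \<forall>v\<in>cint (ACcone E \<xi> k u) \<inter> A. \<xi> i v = \<xi> i u"
    and AC3_iv: "\<forall>u\<in>A. \<forall>i\<in>{1..k}. u \<bullet> \<xi> i u \<noteq> 0"
    and AC3_v: "\<exists>r>0. \<forall>i\<in>{1..k}. \<exists>B. \<forall>u\<in>A. infdist u (\<phi> ` A) < r \<longrightarrow> norm (\<xi>' i u) \<le> B"
    and AC1: "\<forall>u\<in>A. u \<in> ACcone E \<xi> k u"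
    and u_in: "u \<in> A"
    and d_perp: "perp_cone d (ACcone E \<xi> k u)"
  shows "(\<Sum>i=1..k. (u \<bullet> \<xi> i u) *\<^sub>R blinfun_apply (\<xi>' i u) d)
         = d - (\<Sum>i=1..k. (u \<bullet> blinfun_apply (\<xi>' i u) d) *\<^sub>R \<xi> i u)"
proof -
  let ?C = "ACcone E \<xi> k u"
  have inC: "\<And>x. x \<in> ?C \<Longrightarrow> d \<bullet> x = 0"
    using d_perp unfolding perp_cone_def cspan_def
    by (meson closure_subset span_superset subsetD)
  have EC: "\<And>e. e \<in> E \<Longrightarrow> e \<in> ?C"
  proof -
    fix e assume "e \<in> E"
    thus "e \<in> ?C" unfolding ACcone_def
      by (intro CollectI exI[of _ e] exI[of _ "\<lambda>_. 0"]) simp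
  qed
  have dE: "\<And>e. e \<in> E \<Longrightarrow> d \<bullet> e = 0" using EC inC by blast
  have \<xi>C: "\<And>j. j \<in> {1..k} \<Longrightarrow> \<xi> j u \<in> ?C"
  proof -
    fix j assume j: "j \<in> {1..k}"
    have "(\<Sum>i=1..k. (if i = j then 1 else 0) *\<^sub>R \<xi> i u) = \<xi> j u"
    proof -
      have "(\<Sum>i=1..k. (if i = j then 1 else 0) *\<^sub>R \<xi> i u) = (\<Sum>i=1..k. if i = j then \<xi> i u else 0)"
        by (rule sum.cong) auto
      also have "\<dots> = \<xi> j u" using j by simp
      finally show ?thesis .
    qed
    then show "\<xi> j u \<in> ?C" unfolding ACcone_def
      using E_sub subspace_0
      by (intro CollectI exI[of _ 0] exI[of _ "\<lambda>i. if i = j then 1 else 0"]) auto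
  qed
  have d\<xi>: "\<And>j. j \<in> {1..k} \<Longrightarrow> d \<bullet> \<xi> j u = 0" using \<xi>C inC by blast
  define f where "f = (\<lambda>v. v - (\<Sum>i=1..k. (v \<bullet> \<xi> i v) *\<^sub>R \<xi> i v))"
  have fE: "f v \<in> E" if v: "v \<in> A" for v
  proof -
    from AC1 v obtain e t where e: "e \<in> E" and vt: "v = e + (\<Sum>i=1..k. t i *\<^sub>R \<xi> i v)"
      unfolding ACcone_def by blast
    have tj: "v \<bullet> \<xi> j v = t j" if j: "j \<in> {1..k}" for j
    proof -
      have "v \<bullet> \<xi> j v = e \<bullet> \<xi> j v + (\<Sum>i=1..k. t i * (\<xi> i v \<bullet> \<xi> j v))"
        by (subst vt) (simp add: inner_add_left inner_sum_left)
      also have "e \<bullet> \<xi> j v = 0" using \<xi>_perp j v e by (simp add: inner_commute)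
      also have "(\<Sum>i=1..k. t i * (\<xi> i v \<bullet> \<xi> j v)) = (\<Sum>i=1..k. if i = j then t j else 0)"
        by (rule sum.cong) (use AC3_i v j in auto)
      also have "\<dots> = t j" using j by simp
      finally show ?thesis by simp
    qed
    have "(\<Sum>i=1..k. (v \<bullet> \<xi> i v) *\<^sub>R \<xi> i v) = (\<Sum>i=1..k. t i *\<^sub>R \<xi> i v)"
      by (rule sum.cong) (auto simp: tj)
    hence "f v = e" unfolding f_def using vt by (metis add_diff_cancel_right')
    thus ?thesis using e by simp
  qed
  define w where "w = d - (\<Sum>i=1..k. (u \<bullet> \<xi>' i u d) *\<^sub>R \<xi> i u) - (\<Sum>i=1..k. (u \<bullet> \<xi> i u) *\<^sub>R \<xi>' i u d)"
  have \<xi>'E: "\<xi>' i u h \<bullet> e = 0" if i: "i \<in> {1..k}" and e: "e \<in> E" for i h e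
  proof -
    have "((\<lambda>v. \<xi> i v \<bullet> e) has_derivative (\<lambda>h. \<xi>' i u h \<bullet> e)) (at u)"
      using \<xi>_deriv i u_in by (auto intro!: derivative_eq_intros)
    then show ?thesis
      by (rule zero_deriv_open[OF _ A_open u_in]) (use \<xi>_perp i e in auto)
  qed
  have wE: "w \<bullet> e = 0" if e: "e \<in> E" for e
    unfolding w_def using e dE \<xi>'E \<xi>_perp u_in
    by (simp add: inner_diff_left inner_sum_left)
  have fd: "(f has_derivative (\<lambda>h. h - (\<Sum>i=1..k. ((h \<bullet> \<xi> i u + u \<bullet> \<xi>' i u h) *\<^sub>R \<xi> i u
       + (u \<bullet> \<xi> i u) *\<^sub>R \<xi>' i u h)))) (at u)"
    unfolding f_def
    apply (rule derivative_eq_intros has_derivative_sum)+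
    using \<xi>_deriv u_in
    apply (auto intro!: derivative_eq_intros simp: algebra_simps)
    done
  have "((\<lambda>v. f v \<bullet> w) has_derivative (\<lambda>h. (h - (\<Sum>i=1..k. ((h \<bullet> \<xi> i u + u \<bullet> \<xi>' i u h) *\<^sub>R \<xi> i u
       + (u \<bullet> \<xi> i u) *\<^sub>R \<xi>' i u h))) \<bullet> w)) (at u)"
    using fd by (auto intro!: derivative_eq_intros)
  hence "(d - (\<Sum>i=1..k. ((d \<bullet> \<xi> i u + u \<bullet> \<xi>' i u d) *\<^sub>R \<xi> i u
       + (u \<bullet> \<xi> i u) *\<^sub>R \<xi>' i u d))) \<bullet> w = 0"
    by (rule zero_deriv_open[OF _ A_open u_in]) (use fE wE in \<open>metis inner_commute\<close>)
  moreover have "d - (\<Sum>i=1..k. ((d \<bullet> \<xi> i u + u \<bullet> \<xi>' i u d) *\<^sub>R \<xi> i u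
       + (u \<bullet> \<xi> i u) *\<^sub>R \<xi>' i u d)) = w"
    unfolding w_def using d\<xi> by (simp add: sum.distrib algebra_simps)
  ultimately have "w = 0" by simp
  thus ?thesis unfolding w_def by (simp add: algebra_simps)
qed

end
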